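(* Let $\{GM_n\}$ be the Gaussian Tetranacci numbers. Then for every $n\ge1$: (a) $\sum_{k=1}^nGM_k=\frac13\left(GM_{n+2}+2GM_n+GM_{n-1}-(1+i)\right)$; (b) $\sum_{k=1}^nGM_{2k+1}=\frac13\left(2GM_{2n+2}+GM_{2n}-GM_{2n-1}-2-2i\right)$; (c) $\sum_{k=1}^nGM_{2k}=\frac13\left(2GM_{2n+1}+GM_{2n-1}-GM_{2n-2}-2+i\right)$.
   Context: The Gaussian Tetranacci numbers are defined by $GM_0=0$, $GM_1=1$, $GM_2=1+i$, $GM_3=2+i$ and $GM_n=GM_{n-1}+GM_{n-2}+GM_{n-3}+GM_{n-4}$ for $n\ge4$. *)

theory Defs
  imports Complex_Main
begin

fun GM :: "nat \<Rightarrow> complex" where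
  "GM 0 = 0"
| "GM (Suc 0) = 1"
| "GM (Suc (Suc 0)) = 1 + \<i>"
| "GM (Suc (Suc (Suc 0))) = 2 + \<i>"
| "GM (Suc (Suc (Suc (Suc n)))) = GM (Suc (Suc (Suc n))) + GM (Suc (Suc n)) + GM (Suc n) + GM n"

end

theory Submission
  imports Defs
begin

lemma GM_rec: "GM (n+4) = GM (n+3) + GM (n+2) + GM (n+1) + GM n"
  by (simp add: numeral_eq_Suc)

lemma algA:
  fixes S a0 a1 a2 a3 a4 :: complex
  assumes "S = (a3 + 2 * a1 + a0 - c) / 3" "a4 = a3 + a2 + a1 + a0"
  shows "S + a2 = (a4 + 2 * a2 + a1 - c) / 3"
  using assms by (simp add: field_simps)

lemma algB:
  fixes S a1 a2 a3 a4 a5 a6 :: complex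
  assumes "S = (2 * a4 + a2 - a1 - c) / 3" "a6 = a5 + a4 + a3 + a2" "a5 = a4 + a3 + a2 + a1"
  shows "S + a5 = (2 * a6 + a4 - a3 - c) / 3"
  using assms by (simp add: field_simps)

lemma algC:
  fixes S a0 a1 a2 a3 a4 a5 :: complex
  assumes "S = (2 * a3 + a1 - a0 + c) / 3" "a5 = a4 + a3 + a2 + a1" "a4 = a3 + a2 + a1 + a0"
  shows "S + a4 = (2 * a5 + a3 - a2 + c) / 3"
  using assms by (simp add: field_simps)

lemma aux:
  "(\<Sum>k=1..Suc m. GM k) = (GM (m+3) + 2 * GM (m+1) + GM m - (1 + \<i>)) / 3 \<and>
   (\<Sum>k=1..Suc m. GM (2*k+1)) = (2 * GM (2*m+4) + GM (2*m+2) - GM (2*m+1) - (2 + 2*\<i>)) / 3 \<and>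
   (\<Sum>k=1..Suc m. GM (2*k)) = (2 * GM (2*m+3) + GM (2*m+1) - GM (2*m) + (\<i> - 2)) / 3"
proof (induction m)
  case 0
  show ?case by (simp add: numeral_eq_Suc field_simps complex_eq_iff)
next
  case (Suc m)
  define B where "B = 2 * Suc m"
  have IH1: "(\<Sum>k=1..Suc m. GM k) = (GM (m+3) + 2 * GM (m+1) + GM m - (1 + \<i>)) / 3"
    and IH2: "(\<Sum>k=1..Suc m. GM (2*k+1)) = (2 * GM (B+2) + GM B - GM (2*m+1) - (2 + 2*\<i>)) / 3"
    and IH3: "(\<Sum>k=1..Suc m. GM (2*k)) = (2 * GM (B+1) + GM (2*m+1) - GM (2*m) + (\<i> - 2)) / 3"
  proof -
    have q: "2*m+4 = B+2" "2*m+2 = B" "2*m+3 = B+1" unfolding B_def by simp_all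
    show "(\<Sum>k=1..Suc m. GM k) = (GM (m+3) + 2 * GM (m+1) + GM m - (1 + \<i>)) / 3"
      "(\<Sum>k=1..Suc m. GM (2*k+1)) = (2 * GM (B+2) + GM B - GM (2*m+1) - (2 + 2*\<i>)) / 3"
      "(\<Sum>k=1..Suc m. GM (2*k)) = (2 * GM (B+1) + GM (2*m+1) - GM (2*m) + (\<i> - 2)) / 3"
      using Suc.IH unfolding q by auto
  qed
  have e1: "(\<Sum>k=1..Suc (Suc m). GM k) = (\<Sum>k=1..Suc m. GM k) + GM (Suc m + 1)"
    by (simp del: GM.simps)
  have e2: "(\<Sum>k=1..Suc (Suc m). GM (2*k+1)) = (\<Sum>k=1..Suc m. GM (2*k+1)) + GM (B+3)"
  proof -
    have "GM (2*Suc(Suc m)+1) = GM (B+3)" by (rule arg_cong[where f=GM]) (simp add: B_def)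
    then show ?thesis unfolding sum.cl_ivl_Suc by (simp del: GM.simps)
  qed
  have e3: "(\<Sum>k=1..Suc (Suc m). GM (2*k)) = (\<Sum>k=1..Suc m. GM (2*k)) + GM (B+2)"
  proof -
    have "GM (2*Suc(Suc m)) = GM (B+2)" by (rule arg_cong[where f=GM]) (simp add: B_def)
    then show ?thesis unfolding sum.cl_ivl_Suc by (simp del: GM.simps)
  qed
  have r1: "GM (Suc m + 3) = GM (Suc m + 2) + GM (Suc m + 1) + GM (Suc m) + GM m"
  proof -
    have q: "GM (m+4) = GM (Suc m + 3)" "GM (m+3) = GM (Suc m + 2)" "GM (m+2) = GM (Suc m + 1)"
      "GM (m+1) = GM (Suc m)" by (rule arg_cong[where f=GM], simp)+
    show ?thesis using GM_rec[of m] unfolding q .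
  qed
  have r1': "GM (Suc m + 2) = GM (m+3)" "GM (Suc m) = GM (m+1)" by (rule arg_cong[where f=GM], simp)+
  have rB4: "GM (B+4) = GM (B+3) + GM (B+2) + GM (B+1) + GM B" by (rule GM_rec)
  have rB3: "GM (B+3) = GM (B+2) + GM (B+1) + GM B + GM (2*m+1)"
  proof -
    have q: "GM (2*m+1+4) = GM (B+3)" "GM (2*m+1+3) = GM (B+2)" "GM (2*m+1+2) = GM (B+1)"
      "GM (2*m+1+1) = GM B" by (rule arg_cong[where f=GM], simp add: B_def)+
    show ?thesis using GM_rec[of "2*m+1"] unfolding q .
  qed
  have rB2: "GM (B+2) = GM (B+1) + GM B + GM (2*m+1) + GM (2*m)"
  proof -
    have q: "GM (2*m+4) = GM (B+2)" "GM (2*m+3) = GM (B+1)" "GM (2*m+2) = GM B"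
      by (rule arg_cong[where f=GM], simp add: B_def)+
    show ?thesis using GM_rec[of "2*m"] unfolding q .
  qed
  have A: "(\<Sum>k=1..Suc (Suc m). GM k) = (GM (Suc m + 3) + 2 * GM (Suc m + 1) + GM (Suc m) - (1 + \<i>)) / 3"
    unfolding e1 using algA[OF IH1[folded r1'] r1] by simp
  have Bp: "(\<Sum>k=1..Suc (Suc m). GM (2*k+1)) = (2 * GM (B+4) + GM (B+2) - GM (B+1) - (2 + 2*\<i>)) / 3"
    unfolding e2 by (rule algB[OF IH2 rB4 rB3])
  have C: "(\<Sum>k=1..Suc (Suc m). GM (2*k)) = (2 * GM (B+3) + GM (B+1) - GM B + (\<i> - 2)) / 3"
    unfolding e3 by (rule algC[OF IH3 rB3 rB2])
  show ?case using A Bp C unfolding B_def by (simp del: GM.simps add: algebra_simps)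
qed

theorem mainTheorem13:
  fixes n :: nat
  assumes "n \<ge> 1"
  shows "(\<Sum>k=1..n. GM k) = (GM (n+2) + 2 * GM n + GM (n-1) - (1 + \<i>)) / 3 \<and>
         (\<Sum>k=1..n. GM (2*k+1)) = (2 * GM (2*n+2) + GM (2*n) - GM (2*n-1) - 2 - 2*\<i>) / 3 \<and>
         (\<Sum>k=1..n. GM (2*k)) = (2 * GM (2*n+1) + GM (2*n-1) - GM (2*n-2) - 2 + \<i>) / 3"
proof -
  obtain m where n: "n = Suc m" using assms by (cases n) auto
  have b: "GM (n+2) = GM (m+3)" "GM n = GM (m+1)" "GM (n-1) = GM m" "GM (2*n+2) = GM (2*m+4)"
    "GM (2*n) = GM (2*m+2)" "GM (2*n-1) = GM (2*m+1)" "GM (2*n+1) = GM (2*m+3)" "GM (2*n-2) = GM (2*m)"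
    unfolding n by (rule arg_cong[where f=GM], simp)+
  have s: "(\<Sum>k=1..n. GM k) = (\<Sum>k=1..Suc m. GM k)" "(\<Sum>k=1..n. GM (2*k+1)) = (\<Sum>k=1..Suc m. GM (2*k+1))"
    "(\<Sum>k=1..n. GM (2*k)) = (\<Sum>k=1..Suc m. GM (2*k))" unfolding n by simp_all
  have d: "\<And>x y::complex. x - 2 - 2*\<i> = x - (2 + 2*\<i>)" "\<And>x::complex. x - 2 + \<i> = x + (\<i> - 2)"
    by simp_all
  show ?thesis unfolding b s d by (rule aux)
qed

end
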